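(* With the notation of the context, $H\varepsilon\cdot\lambda^*M\cdot S\lambda=\lambda S\cdot M\lambda^*\cdot\varepsilon H:SMH\to HMS$.
   Context: $\mathcal A$ is cocomplete, $H$ is an endofunctor, $(M,\eta)$ is a pointed endofunctor (a functor with natural transformation $\eta:\mathrm{Id}\to M$), and $\lambda:MH\to HM$ is a natural transformation with $\lambda\cdot\eta H=H\eta$. $M^n$ is the $n$-fold composite. $S$ is the colimit (computed objectwise) of the diagram consisting of all $M^n$ and all natural transformations $M^i\eta M^j:M^{i+j}\to M^{i+1+j}$, with injections $\mathrm{in}^n:M^n\to S$ (so $SG$ is the colimit with injections $\mathrm{in}^nG$ for any endofunctor $G$). Let $\varepsilon:SM\to MS$ be determined by $\varepsilon\cdot\mathrm{in}^nM=M\mathrm{in}^n$. Define $\lambda^0=\mathrm{id}_H$, $\lambda^{n+1}=\lambda M^n\cdot M\lambda^n:M^{n+1}H\to HM^{n+1}$, and let $\lambda^*:SH\to HS$ be determined by $\lambda^*\cdot\mathrm{in}^nH=H\mathrm{in}^n\cdot\lambda^n$ for all $n$. *)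

theory Defs
  imports Main
begin

text \<open>A minimal rendering of (locally small-agnostic) categories: objects of type 'o,
arrows of type 'a, with carrier sets, domain, codomain, identities and composition
(Cmp C g f is "g after f").\<close>

record ('o, 'a) cat =
  Ob  :: "'o set"
  Ar  :: "'a set"
  Dom :: "'a \<Rightarrow> 'o"
  Cod :: "'a \<Rightarrow> 'o"
  Id  :: "'o \<Rightarrow> 'a"
  Cmp :: "'a \<Rightarrow> 'a \<Rightarrow> 'a"

definition hom :: "('o, 'a) cat \<Rightarrow> 'o \<Rightarrow> 'o \<Rightarrow> 'a set" where
  "hom C X Y = {f \<in> Ar C. Dom C f = X \<and> Cod C f = Y}"

definition category :: "('o, 'a) cat \<Rightarrow> bool" where
  "category C \<longleftrightarrow>
     (\<forall>f \<in> Ar C. Dom C f \<in> Ob C \<and> Cod C f \<in> Ob C) \<and>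
     (\<forall>X \<in> Ob C. Id C X \<in> hom C X X) \<and>
     (\<forall>X Y Z f g. f \<in> hom C X Y \<longrightarrow> g \<in> hom C Y Z \<longrightarrow> Cmp C g f \<in> hom C X Z) \<and>
     (\<forall>X Y f. f \<in> hom C X Y \<longrightarrow> Cmp C (Id C Y) f = f \<and> Cmp C f (Id C X) = f) \<and>
     (\<forall>W X Y Z f g h. f \<in> hom C W X \<longrightarrow> g \<in> hom C X Y \<longrightarrow> h \<in> hom C Y Z \<longrightarrow>
        Cmp C h (Cmp C g f) = Cmp C (Cmp C h g) f)"

definition endofunctor :: "('o, 'a) cat \<Rightarrow> ('o \<Rightarrow> 'o) \<Rightarrow> ('a \<Rightarrow> 'a) \<Rightarrow> bool" where
  "endofunctor C Fo Fa \<longleftrightarrow>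
     (\<forall>X \<in> Ob C. Fo X \<in> Ob C) \<and>
     (\<forall>X Y f. f \<in> hom C X Y \<longrightarrow> Fa f \<in> hom C (Fo X) (Fo Y)) \<and>
     (\<forall>X \<in> Ob C. Fa (Id C X) = Id C (Fo X)) \<and>
     (\<forall>X Y Z f g. f \<in> hom C X Y \<longrightarrow> g \<in> hom C Y Z \<longrightarrow> Fa (Cmp C g f) = Cmp C (Fa g) (Fa f))"

definition nat_trans :: "('o, 'a) cat \<Rightarrow> ('o \<Rightarrow> 'o) \<Rightarrow> ('a \<Rightarrow> 'a) \<Rightarrow> ('o \<Rightarrow> 'o) \<Rightarrow> ('a \<Rightarrow> 'a)
    \<Rightarrow> ('o \<Rightarrow> 'a) \<Rightarrow> bool" where
  "nat_trans C Fo Fa Go Ga \<alpha> \<longleftrightarrow>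
     (\<forall>X \<in> Ob C. \<alpha> X \<in> hom C (Fo X) (Go X)) \<and>
     (\<forall>X Y f. f \<in> hom C X Y \<longrightarrow> Cmp C (\<alpha> Y) (Fa f) = Cmp C (Ga f) (\<alpha> X))"

text \<open>The diagram D_X consists of all objects M^n X and all arrows
  (M^i eta M^j)_X = M^i (eta (M^j X)) : M^(i+j) X \<rightarrow> M^(i+1+j) X.\<close>

definition chain_cocone :: "('o, 'a) cat \<Rightarrow> ('o \<Rightarrow> 'o) \<Rightarrow> ('a \<Rightarrow> 'a) \<Rightarrow> ('o \<Rightarrow> 'a)
    \<Rightarrow> 'o \<Rightarrow> 'o \<Rightarrow> (nat \<Rightarrow> 'a) \<Rightarrow> bool" where
  "chain_cocone C Mo Ma \<eta> X Y c \<longleftrightarrow>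
     (\<forall>n. c n \<in> hom C ((Mo ^^ n) X) Y) \<and>
     (\<forall>i j. Cmp C (c (i + 1 + j)) ((Ma ^^ i) (\<eta> ((Mo ^^ j) X))) = c (i + j))"

definition chain_colimit :: "('o, 'a) cat \<Rightarrow> ('o \<Rightarrow> 'o) \<Rightarrow> ('a \<Rightarrow> 'a) \<Rightarrow> ('o \<Rightarrow> 'a)
    \<Rightarrow> 'o \<Rightarrow> 'o \<Rightarrow> (nat \<Rightarrow> 'a) \<Rightarrow> bool" where
  "chain_colimit C Mo Ma \<eta> X L inc \<longleftrightarrow>
     L \<in> Ob C \<and> chain_cocone C Mo Ma \<eta> X L inc \<and>
     (\<forall>Y c. Y \<in> Ob C \<longrightarrow> chain_cocone C Mo Ma \<eta> X Y c \<longrightarrow>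
        (\<exists>!u. u \<in> hom C L Y \<and> (\<forall>n. Cmp C u (inc n) = c n)))"

fun lam_pow :: "('o, 'a) cat \<Rightarrow> ('o \<Rightarrow> 'o) \<Rightarrow> ('a \<Rightarrow> 'a) \<Rightarrow> ('o \<Rightarrow> 'o) \<Rightarrow> ('o \<Rightarrow> 'a)
    \<Rightarrow> nat \<Rightarrow> 'o \<Rightarrow> 'a" where
  "lam_pow C Mo Ma Ho lam 0 X = Id C (Ho X)"
| "lam_pow C Mo Ma Ho lam (Suc n) X = Cmp C (lam ((Mo ^^ n) X)) (Ma (lam_pow C Mo Ma Ho lam n X))"

end

theory Submission
  imports Defs
begin

lemma cat_comp: "category C \<Longrightarrow> f \<in> hom C X Y \<Longrightarrow> g \<in> hom C Y Z \<Longrightarrow> Cmp C g f \<in> hom C X Z"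
  unfolding category_def by blast

lemma cat_assoc: "category C \<Longrightarrow> f \<in> hom C W X \<Longrightarrow> g \<in> hom C X Y \<Longrightarrow> h \<in> hom C Y Z \<Longrightarrow>
  Cmp C h (Cmp C g f) = Cmp C (Cmp C h g) f"
  unfolding category_def by blast

lemma cat_idl: "category C \<Longrightarrow> f \<in> hom C X Y \<Longrightarrow> Cmp C (Id C Y) f = f"
  unfolding category_def by blast
lemma cat_idr: "category C \<Longrightarrow> f \<in> hom C X Y \<Longrightarrow> Cmp C f (Id C X) = f"
  unfolding category_def by blast

lemma endo_ob: "endofunctor C Fo Fa \<Longrightarrow> X \<in> Ob C \<Longrightarrow> Fo X \<in> Ob C"
  unfolding endofunctor_def by blast
lemma endo_hom: "endofunctor C Fo Fa \<Longrightarrow> f \<in> hom C X Y \<Longrightarrow> Fa f \<in> hom C (Fo X) (Fo Y)"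
  unfolding endofunctor_def by blast
lemma endo_cmp: "endofunctor C Fo Fa \<Longrightarrow> f \<in> hom C X Y \<Longrightarrow> g \<in> hom C Y Z \<Longrightarrow>
   Fa (Cmp C g f) = Cmp C (Fa g) (Fa f)"
  unfolding endofunctor_def by blast
lemma endo_id: "endofunctor C Fo Fa \<Longrightarrow> X \<in> Ob C \<Longrightarrow> Fa (Id C X) = Id C (Fo X)"
  unfolding endofunctor_def by blast

lemma endo_pow: "endofunctor C Fo Fa \<Longrightarrow> endofunctor C (Fo ^^ n) (Fa ^^ n)"
proof (induction n)
  case 0
  then show ?case unfolding endofunctor_def by simp
next
  case (Suc n)
  then have IH: "endofunctor C (Fo ^^ n) (Fa ^^ n)" by simp
  show ?case unfolding endofunctor_def
    using endo_ob[OF Suc.prems] endo_ob[OF IH] endo_hom[OF Suc.prems] endo_hom[OF IH]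
      endo_id[OF Suc.prems] endo_id[OF IH] endo_cmp[OF Suc.prems] endo_cmp[OF IH]
    by (simp, meson)
qed

lemma nt_hom: "nat_trans C Fo Fa Go Ga a \<Longrightarrow> X \<in> Ob C \<Longrightarrow> a X \<in> hom C (Fo X) (Go X)"
  unfolding nat_trans_def by blast
lemma nt_nat: "nat_trans C Fo Fa Go Ga a \<Longrightarrow> f \<in> hom C X Y \<Longrightarrow> Cmp C (a Y) (Fa f) = Cmp C (Ga f) (a X)"
  unfolding nat_trans_def by blast

lemma hom_ob: "category C \<Longrightarrow> f \<in> hom C X Y \<Longrightarrow> X \<in> Ob C \<and> Y \<in> Ob C"
  unfolding category_def hom_def by auto

lemma colim_unique:
  assumes cat: "category C" and M: "endofunctor C Mo Ma" and eta: "nat_trans C id id Mo Ma \<eta>"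
    and X: "X \<in> Ob C"
    and col: "chain_colimit C Mo Ma \<eta> X L inc"
    and u: "u \<in> hom C L Y" and v: "v \<in> hom C L Y"
    and eq: "\<And>n. Cmp C u (inc n) = Cmp C v (inc n)"
  shows "u = v"
proof -
  have Y: "Y \<in> Ob C" using hom_ob[OF cat u] by simp
  have cc: "chain_cocone C Mo Ma \<eta> X L inc" using col unfolding chain_colimit_def by blast
  have inch: "\<And>n. inc n \<in> hom C ((Mo ^^ n) X) L" using cc unfolding chain_cocone_def by blast
  have obn: "\<And>n. (Mo ^^ n) X \<in> Ob C" using endo_ob[OF endo_pow[OF M] X] .
  have arr: "\<And>i j. (Ma ^^ i) (\<eta> ((Mo ^^ j) X)) \<in> hom C ((Mo ^^ (i + j)) X) ((Mo ^^ (i + 1 + j)) X)"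
  proof -
    fix i j
    have "\<eta> ((Mo ^^ j) X) \<in> hom C ((Mo ^^ j) X) (Mo ((Mo ^^ j) X))"
      using nt_hom[OF eta obn] by simp
    note a = endo_hom[OF endo_pow[OF M] this, of i]
    have e1: "(Mo ^^ i) ((Mo ^^ j) X) = (Mo ^^ (i + j)) X" by (simp add: funpow_add)
    have e2: "(Mo ^^ i) (Mo ((Mo ^^ j) X)) = (Mo ^^ (i + 1 + j)) X"
      by (metis add.commute add_Suc funpow.simps(2) funpow_add o_apply plus_1_eq_Suc)
    show "(Ma ^^ i) (\<eta> ((Mo ^^ j) X)) \<in> hom C ((Mo ^^ (i + j)) X) ((Mo ^^ (i + 1 + j)) X)"
      using a unfolding e1 e2 .
  qed
  have comp: "\<And>i j. Cmp C (inc (i + 1 + j)) ((Ma ^^ i) (\<eta> ((Mo ^^ j) X))) = inc (i + j)"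
    using cc unfolding chain_cocone_def by blast
  define c where "c = (\<lambda>n. Cmp C u (inc n))"
  have "chain_cocone C Mo Ma \<eta> X Y c"
    unfolding chain_cocone_def c_def
  proof (intro conjI allI)
    fix n show "Cmp C u (inc n) \<in> hom C ((Mo ^^ n) X) Y" using cat_comp[OF cat inch u] .
  next
    fix i j
    show "Cmp C (Cmp C u (inc (i + 1 + j))) ((Ma ^^ i) (\<eta> ((Mo ^^ j) X))) = Cmp C u (inc (i + j))"
      using cat_assoc[OF cat arr inch u] comp by simp
  qed
  then have "\<exists>!w. w \<in> hom C L Y \<and> (\<forall>n. Cmp C w (inc n) = c n)"
    using col Y unfolding chain_colimit_def by blast
  then show ?thesis using u v eq unfolding c_def by metis
qed

theorem mainTheorem17:
  fixes C :: "('o, 'a) cat"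
    and Ho Mo So :: "'o \<Rightarrow> 'o" and Ha Ma Sa :: "'a \<Rightarrow> 'a"
    and \<eta> lam \<epsilon> lams :: "'o \<Rightarrow> 'a"
    and inc :: "nat \<Rightarrow> 'o \<Rightarrow> 'a"
  assumes cat: "category C"
    and H: "endofunctor C Ho Ha"
    and M: "endofunctor C Mo Ma"
    and eta: "nat_trans C id id Mo Ma \<eta>"
    and lam_nat: "nat_trans C (Mo \<circ> Ho) (Ma \<circ> Ha) (Ho \<circ> Mo) (Ha \<circ> Ma) lam"
    and lam_eta: "\<forall>X \<in> Ob C. Cmp C (lam X) (\<eta> (Ho X)) = Ha (\<eta> X)"
    and S: "endofunctor C So Sa"
    and inc_nat: "\<forall>n. nat_trans C (Mo ^^ n) (Ma ^^ n) So Sa (inc n)"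
    and colim: "\<forall>X \<in> Ob C. chain_colimit C Mo Ma \<eta> X (So X) (\<lambda>n. inc n X)"
    and eps_hom: "\<forall>X \<in> Ob C. \<epsilon> X \<in> hom C (So (Mo X)) (Mo (So X))"
    and eps_def: "\<forall>X \<in> Ob C. \<forall>n. Cmp C (\<epsilon> X) (inc n (Mo X)) = Ma (inc n X)"
    and lams_hom: "\<forall>X \<in> Ob C. lams X \<in> hom C (So (Ho X)) (Ho (So X))"
    and lams_def: "\<forall>X \<in> Ob C. \<forall>n.
          Cmp C (lams X) (inc n (Ho X)) = Cmp C (Ha (inc n X)) (lam_pow C Mo Ma Ho lam n X)"
  shows "\<forall>X \<in> Ob C.
     Cmp C (Ha (\<epsilon> X)) (Cmp C (lams (Mo X)) (Sa (lam X))) =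
     Cmp C (lam (So X)) (Cmp C (Ma (lams X)) (\<epsilon> (Ho X)))"
proof
  let ?lp = "lam_pow C Mo Ma Ho lam"
  have obM: "\<And>X. X \<in> Ob C \<Longrightarrow> Mo X \<in> Ob C" using endo_ob[OF M] .
  have obH: "\<And>X. X \<in> Ob C \<Longrightarrow> Ho X \<in> Ob C" using endo_ob[OF H] .
  have obS: "\<And>X. X \<in> Ob C \<Longrightarrow> So X \<in> Ob C" using endo_ob[OF S] .
  have obMn: "\<And>X n. X \<in> Ob C \<Longrightarrow> (Mo ^^ n) X \<in> Ob C" using endo_ob[OF endo_pow[OF M]] .
  have lamh: "\<And>X. X \<in> Ob C \<Longrightarrow> lam X \<in> hom C (Mo (Ho X)) (Ho (Mo X))"
    using nt_hom[OF lam_nat] by simp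
  have lamn: "\<And>X Y f. f \<in> hom C X Y \<Longrightarrow> Cmp C (lam Y) (Ma (Ha f)) = Cmp C (Ha (Ma f)) (lam X)"
    using nt_nat[OF lam_nat] by simp
  have inch: "\<And>X n. X \<in> Ob C \<Longrightarrow> inc n X \<in> hom C ((Mo ^^ n) X) (So X)"
    using nt_hom inc_nat by metis
  have incn: "\<And>X Y f n. f \<in> hom C X Y \<Longrightarrow> Cmp C (inc n Y) ((Ma ^^ n) f) = Cmp C (Sa f) (inc n X)"
    using nt_nat[OF inc_nat[rule_format]] by blast
  have lph: "\<And>X n. X \<in> Ob C \<Longrightarrow> ?lp n X \<in> hom C ((Mo ^^ n) (Ho X)) (Ho ((Mo ^^ n) X))"
  proof -
    fix X n assume X: "X \<in> Ob C"
    show "?lp n X \<in> hom C ((Mo ^^ n) (Ho X)) (Ho ((Mo ^^ n) X))"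
    proof (induction n)
      case 0
      then show ?case using cat X obH unfolding category_def by simp
    next
      case (Suc n)
      have "Ma (?lp n X) \<in> hom C (Mo ((Mo ^^ n) (Ho X))) (Mo (Ho ((Mo ^^ n) X)))"
        using endo_hom[OF M Suc.IH] .
      from cat_comp[OF cat this lamh[OF obMn[OF X]]] show ?case by simp
    qed
  qed
  have key: "\<And>X n. X \<in> Ob C \<Longrightarrow> Cmp C (?lp n (Mo X)) ((Ma ^^ n) (lam X)) = ?lp (Suc n) X"
  proof -
    fix X n assume X: "X \<in> Ob C"
    show "Cmp C (?lp n (Mo X)) ((Ma ^^ n) (lam X)) = ?lp (Suc n) X"
    proof (induction n)
      case 0
      have "Ma (Id C (Ho X)) = Id C (Mo (Ho X))" using endo_id[OF M obH[OF X]] .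
      then show ?case using cat_idl[OF cat lamh[OF X]] cat_idr[OF cat lamh[OF X]] by simp
    next
      case (Suc n)
      have h1: "Ma (?lp n (Mo X)) \<in> hom C (Mo ((Mo ^^ n) (Ho (Mo X)))) (Mo (Ho ((Mo ^^ n) (Mo X))))"
        using endo_hom[OF M lph[OF obM[OF X]]] .
      have h2: "Ma ((Ma ^^ n) (lam X)) \<in> hom C (Mo ((Mo ^^ n) (Mo (Ho X)))) (Mo ((Mo ^^ n) (Ho (Mo X))))"
        using endo_hom[OF M endo_hom[OF endo_pow[OF M] lamh[OF X]]] .
      have h3: "lam ((Mo ^^ n) (Mo X)) \<in> hom C (Mo (Ho ((Mo ^^ n) (Mo X)))) (Ho (Mo ((Mo ^^ n) (Mo X))))"
        using lamh[OF obMn[OF obM[OF X]]] .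
      have "Cmp C (?lp (Suc n) (Mo X)) ((Ma ^^ Suc n) (lam X))
          = Cmp C (Cmp C (lam ((Mo ^^ n) (Mo X))) (Ma (?lp n (Mo X)))) (Ma ((Ma ^^ n) (lam X)))"
        by simp
      also have "\<dots> = Cmp C (lam ((Mo ^^ n) (Mo X))) (Cmp C (Ma (?lp n (Mo X))) (Ma ((Ma ^^ n) (lam X))))"
        using cat_assoc[OF cat h2 h1 h3] by simp
      also have "\<dots> = Cmp C (lam ((Mo ^^ n) (Mo X))) (Ma (Cmp C (?lp n (Mo X)) ((Ma ^^ n) (lam X))))"
        using endo_cmp[OF M endo_hom[OF endo_pow[OF M] lamh[OF X]] lph[OF obM[OF X]]] by simp
      also have "\<dots> = ?lp (Suc (Suc n)) X"
        using Suc.IH by (simp add: funpow_swap1)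
      finally show ?case .
    qed
  qed
  fix X assume X: "X \<in> Ob C"
  define A where "A = Mo (Ho X)"
  have A: "A \<in> Ob C" unfolding A_def using obM obH X by blast
  have e1: "Sa (lam X) \<in> hom C (So A) (So (Ho (Mo X)))" unfolding A_def using endo_hom[OF S lamh[OF X]] .
  have e2: "lams (Mo X) \<in> hom C (So (Ho (Mo X))) (Ho (So (Mo X)))" using lams_hom obM[OF X] by blast
  have e3: "Ha (\<epsilon> X) \<in> hom C (Ho (So (Mo X))) (Ho (Mo (So X)))"
    using endo_hom[OF H] eps_hom X by blast
  have f1: "\<epsilon> (Ho X) \<in> hom C (So A) (Mo (So (Ho X)))" unfolding A_def using eps_hom obH[OF X] by blast
  have f2: "Ma (lams X) \<in> hom C (Mo (So (Ho X))) (Mo (Ho (So X)))" using endo_hom[OF M] lams_hom X by blast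
  have f3: "lam (So X) \<in> hom C (Mo (Ho (So X))) (Ho (Mo (So X)))" using lamh obS X by blast
  have L: "Cmp C (Ha (\<epsilon> X)) (Cmp C (lams (Mo X)) (Sa (lam X))) \<in> hom C (So A) (Ho (Mo (So X)))"
    using cat_comp[OF cat cat_comp[OF cat e1 e2] e3] .
  have R: "Cmp C (lam (So X)) (Cmp C (Ma (lams X)) (\<epsilon> (Ho X))) \<in> hom C (So A) (Ho (Mo (So X)))"
    using cat_comp[OF cat cat_comp[OF cat f1 f2] f3] .
  show "Cmp C (Ha (\<epsilon> X)) (Cmp C (lams (Mo X)) (Sa (lam X))) =
     Cmp C (lam (So X)) (Cmp C (Ma (lams X)) (\<epsilon> (Ho X)))"
  proof (rule colim_unique[OF cat M eta A _ L R])
    show "chain_colimit C Mo Ma \<eta> A (So A) (\<lambda>n. inc n A)" using colim A by blast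
  next
    fix n
    have i0: "inc n A \<in> hom C ((Mo ^^ n) A) (So A)" using inch[OF A] .
    have i1: "inc n (Ho (Mo X)) \<in> hom C ((Mo ^^ n) (Ho (Mo X))) (So (Ho (Mo X)))"
      using inch obH obM X by blast
    have m1: "(Ma ^^ n) (lam X) \<in> hom C ((Mo ^^ n) A) ((Mo ^^ n) (Ho (Mo X)))"
      unfolding A_def using endo_hom[OF endo_pow[OF M] lamh[OF X]] .
    have l1: "?lp n (Mo X) \<in> hom C ((Mo ^^ n) (Ho (Mo X))) (Ho ((Mo ^^ n) (Mo X)))"
      using lph[OF obM[OF X]] .
    have hi: "Ha (inc n (Mo X)) \<in> hom C (Ho ((Mo ^^ n) (Mo X))) (Ho (So (Mo X)))"
      using endo_hom[OF H inch[OF obM[OF X]]] .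
    have ix: "inc n X \<in> hom C ((Mo ^^ n) X) (So X)" using inch[OF X] .
    have ihx: "inc n (Ho X) \<in> hom C ((Mo ^^ n) (Ho X)) (So (Ho X))" using inch[OF obH[OF X]] .
    have lx: "?lp n X \<in> hom C ((Mo ^^ n) (Ho X)) (Ho ((Mo ^^ n) X))" using lph[OF X] .
    have hix: "Ha (inc n X) \<in> hom C (Ho ((Mo ^^ n) X)) (Ho (So X))" using endo_hom[OF H ix] .
    have mhix: "Ma (Ha (inc n X)) \<in> hom C (Mo (Ho ((Mo ^^ n) X))) (Mo (Ho (So X)))" using endo_hom[OF M hix] .
    have mlx: "Ma (?lp n X) \<in> hom C (Mo ((Mo ^^ n) (Ho X))) (Mo (Ho ((Mo ^^ n) X)))" using endo_hom[OF M lx] .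
    have hmix: "Ha (Ma (inc n X)) \<in> hom C (Ho (Mo ((Mo ^^ n) X))) (Ho (Mo (So X)))"
      using endo_hom[OF H endo_hom[OF M ix]] .
    have lmx: "lam ((Mo ^^ n) X) \<in> hom C (Mo (Ho ((Mo ^^ n) X))) (Ho (Mo ((Mo ^^ n) X)))"
      using lamh[OF obMn[OF X]] .
    have epx: "Cmp C (\<epsilon> X) (inc n (Mo X)) = Ma (inc n X)" using eps_def X by blast
    have epH: "Cmp C (\<epsilon> (Ho X)) (inc n A) = Ma (inc n (Ho X))" unfolding A_def using eps_def obH[OF X] by blast
    have lsM: "Cmp C (lams (Mo X)) (inc n (Ho (Mo X))) = Cmp C (Ha (inc n (Mo X))) (?lp n (Mo X))"
      using lams_def obM[OF X] by blast
    have lsX: "Cmp C (lams X) (inc n (Ho X)) = Cmp C (Ha (inc n X)) (?lp n X)" using lams_def X by blast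
    have epxh: "\<epsilon> X \<in> hom C (So (Mo X)) (Mo (So X))" using eps_hom X by blast
    have lhs: "Cmp C (Cmp C (Ha (\<epsilon> X)) (Cmp C (lams (Mo X)) (Sa (lam X)))) (inc n A)
        = Cmp C (Ha (Ma (inc n X))) (?lp (Suc n) X)"
    proof -
      have "Cmp C (Cmp C (Ha (\<epsilon> X)) (Cmp C (lams (Mo X)) (Sa (lam X)))) (inc n A)
          = Cmp C (Ha (\<epsilon> X)) (Cmp C (lams (Mo X)) (Cmp C (Sa (lam X)) (inc n A)))"
        using cat_assoc[OF cat i0 e1 e2] cat_assoc[OF cat i0 cat_comp[OF cat e1 e2] e3]
          cat_assoc[OF cat e1 e2 e3] by simp
      also have "\<dots> = Cmp C (Ha (\<epsilon> X)) (Cmp C (lams (Mo X)) (Cmp C (inc n (Ho (Mo X))) ((Ma ^^ n) (lam X))))"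
        using incn[OF lamh[OF X], of n] unfolding A_def by simp
      also have "\<dots> = Cmp C (Ha (\<epsilon> X)) (Cmp C (Cmp C (Ha (inc n (Mo X))) (?lp n (Mo X))) ((Ma ^^ n) (lam X)))"
        using cat_assoc[OF cat m1 i1 e2] lsM by simp
      also have "\<dots> = Cmp C (Cmp C (Ha (\<epsilon> X)) (Ha (inc n (Mo X)))) (Cmp C (?lp n (Mo X)) ((Ma ^^ n) (lam X)))"
        using cat_assoc[OF cat m1 l1 hi] cat_assoc[OF cat cat_comp[OF cat m1 l1] hi e3] by simp
      also have "\<dots> = Cmp C (Ha (Ma (inc n X))) (?lp (Suc n) X)"
        using endo_cmp[OF H inch[OF obM[OF X]] epxh, symmetric] epx key[OF X] by simp
      finally show ?thesis .
    qed
    have rhs: "Cmp C (Cmp C (lam (So X)) (Cmp C (Ma (lams X)) (\<epsilon> (Ho X)))) (inc n A)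
        = Cmp C (Ha (Ma (inc n X))) (?lp (Suc n) X)"
    proof -
      have "Cmp C (Cmp C (lam (So X)) (Cmp C (Ma (lams X)) (\<epsilon> (Ho X)))) (inc n A)
          = Cmp C (lam (So X)) (Cmp C (Ma (lams X)) (Cmp C (\<epsilon> (Ho X)) (inc n A)))"
        using cat_assoc[OF cat i0 f1 f2] cat_assoc[OF cat i0 cat_comp[OF cat f1 f2] f3] by simp
      also have "\<dots> = Cmp C (lam (So X)) (Ma (Cmp C (lams X) (inc n (Ho X))))"
        using epH endo_cmp[OF M ihx lams_hom[rule_format, OF X]] by (simp add: A_def)
      also have "\<dots> = Cmp C (lam (So X)) (Cmp C (Ma (Ha (inc n X))) (Ma (?lp n X)))"
        using lsX endo_cmp[OF M lx hix] by simp
      also have "\<dots> = Cmp C (Cmp C (Ha (Ma (inc n X))) (lam ((Mo ^^ n) X))) (Ma (?lp n X))"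
        using cat_assoc[OF cat mlx mhix f3] lamn[OF ix] by simp
      also have "\<dots> = Cmp C (Ha (Ma (inc n X))) (?lp (Suc n) X)"
        using cat_assoc[OF cat mlx lmx hmix] by simp
      finally show ?thesis .
    qed
    show "Cmp C (Cmp C (Ha (\<epsilon> X)) (Cmp C (lams (Mo X)) (Sa (lam X)))) (inc n A) =
          Cmp C (Cmp C (lam (So X)) (Cmp C (Ma (lams X)) (\<epsilon> (Ho X)))) (inc n A)"
      using lhs rhs by simp
  qed
qed

end
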